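(* Let $f:\mathbf{R}^d\times\mathbf{R}^n\to\mathbf{R}^d$ be Lipschitz continuous in the state variable with constant $L$, i.e. $\|f(x,a)-f(x',a)\|\le L\|x-x'\|$ for all $x,x'\in\mathbf{R}^d$ and all actions $a$, and odd in the action variable, i.e. $f(x,-a)=-f(x,a)$ for all $x,a$. Let $c>0$ and let $a:[0,2]\to[-c,c]^n$ be an action signal, and let $x:[0,2]\to\mathbf{R}^d$ be a solution of $\dot x(t)=f(x(t),a(t))$. Assume that $a(1+t)=-a(1-t)$ for all $t\in[0,1]$. Then $x(2-t)=x(t)$ for all $t\in[0,1]$.
   Context: This models teleoperation with a learned action map: $x(t)\in\mathbf{R}^d$ is the robot state (joint configuration), $a(t)\in\mathbf{R}^n$ with $n\ll d$ is the user's low-dimensional action, taking values in the bounded symmetric domain $[-c,c]^n$, and $f$ maps states and actions to state velocities, so the system evolves by $\dot x(t)=f(x(t),a(t))$. *)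

theory Defs
  imports "HOL-Analysis.Analysis"
begin

end

theory Submission
  imports Defs
begin

lemma phi_deriv:
  fixes z :: "real \<Rightarrow> real ^ 'd"
  assumes "(z has_vector_derivative w) (at t within S)"
  shows "((\<lambda>s. exp (2 * L * s) * inner (z s) (z s)) has_field_derivative
     (exp (2 * L * t) * (2 * L) * inner (z t) (z t) + exp (2 * L * t) * (2 * inner (z t) w))) (at t within S)"
  using assms unfolding has_vector_derivative_def
  by (auto intro!: derivative_eq_intros simp: has_field_derivative_def inner_commute algebra_simps fun_eq_iff)

theorem theorem1:
  fixes f :: "real ^ 'd \<Rightarrow> real ^ 'n \<Rightarrow> real ^ 'd"
    and L c :: real
    and a :: "real \<Rightarrow> real ^ 'n"
    and x :: "real \<Rightarrow> real ^ 'd"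
  assumes lip: "\<And>y y' u. norm (f y u - f y' u) \<le> L * norm (y - y')"
    and odd: "\<And>y u. f y (- u) = - f y u"
    and c_pos: "c > 0"
    and a_bounded: "\<And>t i. t \<in> {0..2} \<Longrightarrow> \<bar>a t $ i\<bar> \<le> c"
    and sol: "\<And>t. t \<in> {0..2} \<Longrightarrow>
                 (x has_vector_derivative f (x t) (a t)) (at t within {0..2})"
    and sym: "\<And>t. t \<in> {0..1} \<Longrightarrow> a (1 + t) = - a (1 - t)"
  shows "\<forall>t \<in> {0..1}. x (2 - t) = x t"
proof -
  define y where "y t = x (2 - t)" for t
  define z where "z t = x t - y t" for t
  define w where "w t = f (x t) (a t) - f (y t) (a t)" for t
  define \<phi> where "\<phi> s = exp (2 * L * s) * inner (z s) (z s)" for s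
  have ay: "a (2 - t) = - a t" if "t \<in> {0..1}" for t
    using sym[of "1 - t"] that by auto
  have dx: "(x has_vector_derivative f (x t) (a t)) (at t within {0..1})" if "t \<in> {0..1}" for t
    using sol[of t] that by (auto intro: has_vector_derivative_within_subset)
  have dy: "(y has_vector_derivative f (y t) (a t)) (at t within {0..1})" if t: "t \<in> {0..1}" for t
  proof -
    have d1: "((\<lambda>s. 2 - s) has_vector_derivative -1) (at t within {0..1})"
      by (auto intro!: derivative_eq_intros simp: has_vector_derivative_def)
    have "(x has_vector_derivative f (x (2 - t)) (a (2 - t))) (at (2 - t) within {0..2})"
      using sol[of "2 - t"] t by auto
    then have d2: "(x has_vector_derivative f (x (2 - t)) (a (2 - t))) (at (2 - t) within (\<lambda>s. 2 - s) ` {0..1})"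
      by (rule has_vector_derivative_within_subset) auto
    have "((x \<circ> (\<lambda>s. 2 - s)) has_vector_derivative (-1) *\<^sub>R f (x (2 - t)) (a (2 - t))) (at t within {0..1})"
      using vector_diff_chain_within[OF d1 d2] by simp
    moreover have "(-1) *\<^sub>R f (x (2 - t)) (a (2 - t)) = f (y t) (a t)"
      using ay[OF t] odd by (simp add: y_def)
    ultimately show ?thesis unfolding y_def[abs_def] by (simp add: o_def)
  qed
  have dz: "(z has_vector_derivative w t) (at t within {0..1})" if "t \<in> {0..1}" for t
    unfolding z_def[abs_def] w_def using dx[OF that] dy[OF that]
    by (rule has_vector_derivative_diff)
  define \<phi>' where "\<phi>' t = exp (2 * L * t) * (2 * L) * inner (z t) (z t) + exp (2 * L * t) * (2 * inner (z t) (w t))" for t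
  have dphi: "(\<phi> has_field_derivative \<phi>' t) (at t within {0..1})" if "t \<in> {0..1}" for t
    unfolding \<phi>_def[abs_def] \<phi>'_def by (rule phi_deriv[OF dz[OF that]])
  have nonneg: "\<phi>' t \<ge> 0" for t
  proof -
    have "norm (w t) \<le> L * norm (z t)" unfolding w_def z_def by (rule lip)
    then have "\<bar>inner (z t) (w t)\<bar> \<le> L * (norm (z t) * norm (z t))"
      using Cauchy_Schwarz_ineq2[of "z t" "w t"]
      by (smt (verit) mult.left_commute mult_left_mono norm_ge_zero)
    moreover have "inner (z t) (z t) = norm (z t) * norm (z t)"
      by (simp add: dot_square_norm power2_eq_square)
    ultimately have "L * inner (z t) (z t) + inner (z t) (w t) \<ge> 0" by (simp add: abs_le_iff)
    then have "exp (2 * L * t) * (2 * (L * inner (z t) (z t) + inner (z t) (w t))) \<ge> 0" by simp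
    then show ?thesis unfolding \<phi>'_def by (simp add: algebra_simps)
  qed
  have cont: "continuous_on {0..1} \<phi>"
    by (rule DERIV_continuous_on[OF dphi])
  have mono: "\<phi> t \<le> \<phi> 1" if t: "t \<in> {0..1}" for t
  proof (rule DERIV_nonneg_imp_increasing_open[of t 1])
    show "t \<le> 1" using t by auto
    show "continuous_on {t..1} \<phi>" using t by (intro continuous_on_subset[OF cont]) auto
    fix s assume s: "t < s" "s < 1"
    then have "s \<in> interior {0..1}" using t by auto
    then have "(\<phi> has_field_derivative \<phi>' s) (at s)"
    proof -
      have "s \<in> {0..1}" using s t by auto
      then have "(\<phi> has_field_derivative \<phi>' s) (at s within {0..1})" by (rule dphi)
      then show ?thesis using at_within_interior[OF \<open>s \<in> interior {0..1}\<close>] by simp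
    qed
    then show "\<exists>y. (\<phi> has_field_derivative y) (at s) \<and> 0 \<le> y" using nonneg by blast
  qed
  have "\<phi> 1 = 0" by (simp add: \<phi>_def z_def y_def)
  show ?thesis
  proof
    fix t :: real assume t: "t \<in> {0..1}"
    have "\<phi> t \<le> 0" using mono[OF t] \<open>\<phi> 1 = 0\<close> by simp
    then have "inner (z t) (z t) \<le> 0" unfolding \<phi>_def
      by (smt (verit) exp_gt_zero mult_pos_pos)
    then have "z t = 0" by (metis antisym inner_eq_zero_iff inner_ge_zero)
    then show "x (2 - t) = x t" by (simp add: z_def y_def)
  qed
qed

end
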